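(* Let $T$ be a complete theory with monster model $\mathcal{U}$, $A\subseteq\mathcal{U}$ small, $\mu\in\mathfrak{M}_x(\mathcal{U})$, $\nu\in\mathfrak{M}_y(\mathcal{U})$, and $\varphi(y)\in\mathcal{L}_y(A)$ with $0<\nu(\varphi(y))<1$. Suppose $\mu\geq_{\mathbb{E},A}\nu$ and this is witnessed by some $\lambda\in\mathfrak{M}^{\mathrm{Am}}_{xy}(A)$. Then $\mu\geq_{\mathbb{E},A}\nu_{[\varphi]}$.
   Context: For $B\subseteq\mathcal{U}$, $\mathcal{L}_x(B)$ is the Boolean algebra of formulas in $x$ with parameters from $B$ modulo $T$, embedded in $\mathcal{L}_{xy}(B)$ via $\varphi(x)\mapsto\varphi(x)\wedge y=y$; $\mathfrak{M}_x(B)$ is the set of finitely additive probability measures on $\mathcal{L}_x(B)$. For $\omega\in\mathfrak{M}_{xy}(B)$, $\pi_x(\omega)(\varphi(x))=\omega(\varphi(x)\wedge y=y)$ (similarly $\pi_y$); $\omega|_C$ is restriction. $\mu\geq_{\mathbb{E},A}\nu$ witnessed by $\lambda\in\mathfrak{M}_{xy}(A)$ means $\pi_x(\lambda)=\mu|_A$ and every $\omega\in\mathfrak{M}_{xy}(\mathcal{U})$ with $\omega|_A=\lambda$, $\pi_x(\omega)=\mu$ satisfies $\pi_y(\omega)=\nu$. $\mathfrak{M}^{\mathrm{Am}}_{xy}(A)$ is the set of separated amalgams: $\lambda\in\mathfrak{M}_{xy}(A)$ with $\lambda(\varphi(x)\wedge\psi(y))=\pi_x(\lambda)(\varphi(x))\cdot\pi_y(\lambda)(\psi(y))$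 for all $\varphi(x)\in\mathcal{L}_x(A)$, $\psi(y)\in\mathcal{L}_y(A)$. The localization $\nu_{[\varphi]}\in\mathfrak{M}_y(\mathcal{U})$ is $\nu_{[\varphi]}(\psi(y))=\nu(\varphi(y)\wedge\psi(y))/\nu(\varphi(y))$. *)

theory Defs
  imports Complex_Main
begin

text \<open>Terms: variables (indexed by nat) or parameters (elements of the monster model,
  whose universe is the whole type 'u).\<close>
datatype 'u trm = Var nat | Par 'u

datatype ('r, 'u) fm =
    Eq "'u trm" "'u trm"
  | Rel 'r "'u trm list"
  | Neg "('r, 'u) fm"
  | Conj "('r, 'u) fm" "('r, 'u) fm"
  | Ex nat "('r, 'u) fm"

fun teval :: "(nat \<Rightarrow> 'u) \<Rightarrow> 'u trm \<Rightarrow> 'u" where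
  "teval e (Var i) = e i"
| "teval e (Par a) = a"

fun sat :: "('r \<Rightarrow> 'u list \<Rightarrow> bool) \<Rightarrow> (nat \<Rightarrow> 'u) \<Rightarrow> ('r, 'u) fm \<Rightarrow> bool" where
  "sat I e (Eq s t) = (teval e s = teval e t)"
| "sat I e (Rel r ts) = I r (map (teval e) ts)"
| "sat I e (Neg \<phi>) = (\<not> sat I e \<phi>)"
| "sat I e (Conj \<phi> \<psi>) = (sat I e \<phi> \<and> sat I e \<psi>)"
| "sat I e (Ex i \<phi>) = (\<exists>a. sat I (e(i := a)) \<phi>)"

fun tparams :: "'u trm \<Rightarrow> 'u set" where
  "tparams (Var i) = {}"
| "tparams (Par a) = {a}"

fun tfv :: "'u trm \<Rightarrow> nat set" where
  "tfv (Var i) = {i}"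
| "tfv (Par a) = {}"

fun params :: "('r, 'u) fm \<Rightarrow> 'u set" where
  "params (Eq s t) = tparams s \<union> tparams t"
| "params (Rel r ts) = \<Union> (set (map tparams ts))"
| "params (Neg \<phi>) = params \<phi>"
| "params (Conj \<phi> \<psi>) = params \<phi> \<union> params \<psi>"
| "params (Ex i \<phi>) = params \<phi>"

fun fv :: "('r, 'u) fm \<Rightarrow> nat set" where
  "fv (Eq s t) = tfv s \<union> tfv t"
| "fv (Rel r ts) = \<Union> (set (map tfv ts))"
| "fv (Neg \<phi>) = fv \<phi>"
| "fv (Conj \<phi> \<psi>) = fv \<phi> \<union> fv \<psi>"
| "fv (Ex i \<phi>) = fv \<phi> - {i}"

fun tmap :: "('u \<Rightarrow> 'u) \<Rightarrow> 'u trm \<Rightarrow> 'u trm" where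
  "tmap f (Var i) = Var i"
| "tmap f (Par a) = Par (f a)"

fun pmap :: "('u \<Rightarrow> 'u) \<Rightarrow> ('r, 'u) fm \<Rightarrow> ('r, 'u) fm" where
  "pmap f (Eq s t) = Eq (tmap f s) (tmap f t)"
| "pmap f (Rel r ts) = Rel r (map (tmap f) ts)"
| "pmap f (Neg \<phi>) = Neg (pmap f \<phi>)"
| "pmap f (Conj \<phi> \<psi>) = Conj (pmap f \<phi>) (pmap f \<psi>)"
| "pmap f (Ex i \<phi>) = Ex i (pmap f \<phi>)"

text \<open>The monster model is the structure with universe UNIV::'u and interpretation I.
  Small = cardinality strictly below that of the monster.\<close>
definition small :: "'u set \<Rightarrow> bool" where
  "small B \<longleftrightarrow> (card_of B, card_of (UNIV :: 'u set)) \<in> ordLess"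

definition saturated :: "('r \<Rightarrow> 'u list \<Rightarrow> bool) \<Rightarrow> bool" where
  "saturated I \<longleftrightarrow> (\<forall>(B :: 'u set) (n :: nat) (p :: ('r, 'u) fm set).
     small B \<and> (\<forall>\<phi>\<in>p. params \<phi> \<subseteq> B \<and> fv \<phi> \<subseteq> {..<n})
     \<and> (\<forall>F\<subseteq>p. finite F \<longrightarrow> (\<exists>e. \<forall>\<phi>\<in>F. sat I e \<phi>))
     \<longrightarrow> (\<exists>e. \<forall>\<phi>\<in>p. sat I e \<phi>))"

definition strongly_homogeneous :: "('r \<Rightarrow> 'u list \<Rightarrow> bool) \<Rightarrow> bool" where
  "strongly_homogeneous I \<longleftrightarrow> (\<forall>(D :: 'u set) (f :: 'u \<Rightarrow> 'u).
     small D \<and> (\<forall>\<phi> :: ('r, 'u) fm. params \<phi> \<subseteq> D \<and> fv \<phi> = {} \<longrightarrow>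
                    (\<forall>e. sat I e \<phi> \<longleftrightarrow> sat I e (pmap f \<phi>)))
     \<longrightarrow> (\<exists>\<sigma>. bij \<sigma> \<and> (\<forall>r vs. I r (map \<sigma> vs) = I r vs) \<and> (\<forall>d\<in>D. \<sigma> d = f d)))"

definition monster :: "('r \<Rightarrow> 'u list \<Rightarrow> bool) \<Rightarrow> bool" where
  "monster I \<longleftrightarrow> saturated I \<and> strongly_homogeneous I"

text \<open>An n-tuple of variables x = (x_0,...,x_{n-1}); formulas modulo T with parameters
  from B are identified with the subsets of U^n they define (lists of length n).\<close>
definition tuples :: "nat \<Rightarrow> 'u list set" where
  "tuples n = {v. length v = n}"

definition Def :: "('r \<Rightarrow> 'u list \<Rightarrow> bool) \<Rightarrow> 'u set \<Rightarrow> nat \<Rightarrow> 'u list set set" where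
  "Def I B n = {{v. length v = n \<and> sat I (\<lambda>i. v ! i) \<phi>} | \<phi> :: ('r, 'u) fm.
                 params \<phi> \<subseteq> B \<and> fv \<phi> \<subseteq> {..<n}}"

text \<open>Finitely additive probability measure on L_n(B) (values outside Def I B n irrelevant).\<close>
definition is_measure :: "('r \<Rightarrow> 'u list \<Rightarrow> bool) \<Rightarrow> 'u set \<Rightarrow> nat \<Rightarrow> ('u list set \<Rightarrow> real) \<Rightarrow> bool" where
  "is_measure I B n m \<longleftrightarrow> m (tuples n) = 1 \<and> (\<forall>X\<in>Def I B n. 0 \<le> m X)
     \<and> (\<forall>X\<in>Def I B n. \<forall>Y\<in>Def I B n. X \<inter> Y = {} \<longrightarrow> m (X \<union> Y) = m X + m Y)"

definition prodset :: "'u list set \<Rightarrow> 'u list set \<Rightarrow> 'u list set" where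
  "prodset X Y = {v @ w | v w. v \<in> X \<and> w \<in> Y}"

definition pix :: "nat \<Rightarrow> ('u list set \<Rightarrow> real) \<Rightarrow> 'u list set \<Rightarrow> real" where
  "pix m \<omega> X = \<omega> (prodset X (tuples m))"

definition piy :: "nat \<Rightarrow> ('u list set \<Rightarrow> real) \<Rightarrow> 'u list set \<Rightarrow> real" where
  "piy n \<omega> Y = \<omega> (prodset (tuples n) Y)"

definition localize :: "('u list set \<Rightarrow> real) \<Rightarrow> 'u list set \<Rightarrow> 'u list set \<Rightarrow> real" where
  "localize \<nu> \<Phi> Y = \<nu> (\<Phi> \<inter> Y) / \<nu> \<Phi>"

text \<open>lambda witnesses mu >=_{E,A} nu (x has length n, y has length m).\<close>
definition E_witness :: "('r \<Rightarrow> 'u list \<Rightarrow> bool) \<Rightarrow> 'u set \<Rightarrow> nat \<Rightarrow> nat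
    \<Rightarrow> ('u list set \<Rightarrow> real) \<Rightarrow> ('u list set \<Rightarrow> real) \<Rightarrow> ('u list set \<Rightarrow> real) \<Rightarrow> bool" where
  "E_witness I A n m \<mu> \<nu> lam \<longleftrightarrow> is_measure I A (n + m) lam
     \<and> (\<forall>X\<in>Def I A n. pix m lam X = \<mu> X)
     \<and> (\<forall>\<omega>. is_measure I UNIV (n + m) \<omega>
            \<and> (\<forall>Z\<in>Def I A (n + m). \<omega> Z = lam Z)
            \<and> (\<forall>X\<in>Def I UNIV n. pix m \<omega> X = \<mu> X)
          \<longrightarrow> (\<forall>Y\<in>Def I UNIV m. piy n \<omega> Y = \<nu> Y))"

definition E_ge :: "('r \<Rightarrow> 'u list \<Rightarrow> bool) \<Rightarrow> 'u set \<Rightarrow> nat \<Rightarrow> nat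
    \<Rightarrow> ('u list set \<Rightarrow> real) \<Rightarrow> ('u list set \<Rightarrow> real) \<Rightarrow> bool" where
  "E_ge I A n m \<mu> \<nu> \<longleftrightarrow> (\<exists>lam. E_witness I A n m \<mu> \<nu> lam)"

definition amalgam :: "('r \<Rightarrow> 'u list \<Rightarrow> bool) \<Rightarrow> 'u set \<Rightarrow> nat \<Rightarrow> nat
    \<Rightarrow> ('u list set \<Rightarrow> real) \<Rightarrow> bool" where
  "amalgam I A n m lam \<longleftrightarrow> is_measure I A (n + m) lam
     \<and> (\<forall>X\<in>Def I A n. \<forall>Y\<in>Def I A m. lam (prodset X Y) = pix m lam X * piy n lam Y)"

end

theory Submission
  imports Defs "HOL-Analysis.Analysis"
begin


lemma teval_cong: "(\<forall>i\<in>tfv t. e i = e' i) \<Longrightarrow> teval e t = teval e' t"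
  by (cases t) auto

lemma sat_cong: "(\<forall>i\<in>fv \<phi>. e i = e' i) \<Longrightarrow> sat I e \<phi> = sat I e' \<phi>"
proof (induction \<phi> arbitrary: e e')
  case (Rel r ts)
  have "map (teval e) ts = map (teval e') ts"
    using Rel by (auto intro!: map_cong teval_cong)
  then show ?case by (simp only: sat.simps)
next
  case (Ex i \<phi>)
  have "\<And>a. sat I (e(i:=a)) \<phi> = sat I (e'(i:=a)) \<phi>"
    using Ex.IH Ex.prems by auto
  then show ?case by simp
next
  case (Eq s t)
  then have "teval e s = teval e' s" "teval e t = teval e' t" by (auto intro: teval_cong)
  then show ?case by simp
next
  case (Neg \<phi>)
  then show ?case by simp
next
  case (Conj \<phi>1 \<phi>2)
  then have "sat I e \<phi>1 = sat I e' \<phi>1" "sat I e \<phi>2 = sat I e' \<phi>2" by auto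
  then show ?case by simp
qed

fun tshift :: "nat \<Rightarrow> 'u trm \<Rightarrow> 'u trm" where
  "tshift k (Var i) = Var (i + k)"
| "tshift k (Par a) = Par a"

fun shift :: "nat \<Rightarrow> ('r, 'u) fm \<Rightarrow> ('r, 'u) fm" where
  "shift k (Eq s t) = Eq (tshift k s) (tshift k t)"
| "shift k (Rel r ts) = Rel r (map (tshift k) ts)"
| "shift k (Neg \<phi>) = Neg (shift k \<phi>)"
| "shift k (Conj \<phi> \<psi>) = Conj (shift k \<phi>) (shift k \<psi>)"
| "shift k (Ex i \<phi>) = Ex (i + k) (shift k \<phi>)"

lemma teval_tshift: "teval e (tshift k t) = teval (\<lambda>i. e (i + k)) t"
  by (cases t) auto

lemma sat_shift: "sat I e (shift k \<phi>) = sat I (\<lambda>i. e (i + k)) \<phi>"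
proof (induction \<phi> arbitrary: e)
  case (Ex i \<phi>)
  have "\<And>a. (\<lambda>j. (e(i + k := a)) (j + k)) = (\<lambda>j. e (j + k))(i := a)"
    by auto
  then show ?case using Ex by simp
qed (simp_all add: teval_tshift comp_def)

lemma tfv_tshift: "tfv (tshift k t) = (\<lambda>i. i + k) ` tfv t"
  by (cases t) auto
lemma tparams_tshift: "tparams (tshift k t) = tparams t"
  by (cases t) auto

lemma fv_shift: "fv (shift k \<phi>) = (\<lambda>i. i + k) ` fv \<phi>"
  by (induction \<phi>) (auto simp: tfv_tshift)

lemma params_shift: "params (shift k \<phi>) = params \<phi>"
  by (induction \<phi>) (auto simp: tparams_tshift)

fun exs :: "nat \<Rightarrow> nat \<Rightarrow> ('r, 'u) fm \<Rightarrow> ('r, 'u) fm" where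
  "exs k 0 \<phi> = \<phi>"
| "exs k (Suc j) \<phi> = Ex k (exs (Suc k) j \<phi>)"

lemma params_exs: "params (exs k j \<phi>) = params \<phi>"
  by (induction j arbitrary: k) auto

lemma fv_exs: "fv (exs k j \<phi>) = fv \<phi> - {k..<k+j}"
  by (induction j arbitrary: k) auto

lemma sat_exs: "sat I e (exs k j \<phi>) \<longleftrightarrow>
   (\<exists>w. length w = j \<and> sat I (\<lambda>i. if k \<le> i \<and> i < k + j then w ! (i - k) else e i) \<phi>)"
proof (induction j arbitrary: k e)
  case 0
  have "\<And>w. (\<lambda>i. if k \<le> i \<and> i < k + 0 then w ! (i - k) else e i) = e" by (intro ext) auto
  then show ?case by auto
next
  case (Suc j)
  have eq: "\<And>a w. (\<lambda>i. if Suc k \<le> i \<and> i < Suc k + j then w ! (i - Suc k) else (e(k := a)) i)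
     = (\<lambda>i. if k \<le> i \<and> i < k + Suc j then (a # w) ! (i - k) else e i)"
  proof
    fix a w i
    show "(if Suc k \<le> i \<and> i < Suc k + j then w ! (i - Suc k) else (e(k := a)) i)
     = (if k \<le> i \<and> i < k + Suc j then (a # w) ! (i - k) else e i)"
      by (cases "i = k") (auto simp: nth_Cons' Suc_diff_Suc)
  qed
  show ?case
  proof
    assume "sat I e (exs k (Suc j) \<phi>)"
    then obtain a w where w: "length w = j"
      "sat I (\<lambda>i. if Suc k \<le> i \<and> i < Suc k + j then w ! (i - Suc k) else (e(k := a)) i) \<phi>"
      using Suc by auto
    from w(2) have "sat I (\<lambda>i. if k \<le> i \<and> i < k + Suc j then (a # w) ! (i - k) else e i) \<phi>"
      by (simp only: eq)
    then show "\<exists>w. length w = Suc j \<and> sat I (\<lambda>i. if k \<le> i \<and> i < k + Suc j then w ! (i - k) else e i) \<phi>"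
      using w(1) by (intro exI[of _ "a # w"] conjI) (simp, assumption)
  next
    assume "\<exists>w. length w = Suc j \<and> sat I (\<lambda>i. if k \<le> i \<and> i < k + Suc j then w ! (i - k) else e i) \<phi>"
    then obtain w where w: "length w = Suc j" "sat I (\<lambda>i. if k \<le> i \<and> i < k + Suc j then w ! (i - k) else e i) \<phi>"
      by blast
    then obtain a w' where aw: "w = a # w'" by (cases w) auto
    from w(2) have "sat I (\<lambda>i. if k \<le> i \<and> i < k + Suc j then (a # w') ! (i - k) else e i) \<phi>"
      unfolding aw .
    then have "sat I (\<lambda>i. if Suc k \<le> i \<and> i < Suc k + j then w' ! (i - Suc k) else (e(k := a)) i) \<phi>"
      by (simp only: eq[symmetric])
    moreover have "length w' = j" using w(1) aw by simp
    ultimately have "length w' = j \<and> sat I (\<lambda>i. if Suc k \<le> i \<and> i < Suc k + j then w' ! (i - Suc k) else (e(k := a)) i) \<phi>"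
      by blast
    then show "sat I e (exs k (Suc j) \<phi>)" using Suc by auto
  qed
qed

lemma Def_sub: "X \<in> Def I B k \<Longrightarrow> X \<subseteq> tuples k"
  by (auto simp: Def_def tuples_def)

lemma Def_mono: "B \<subseteq> C \<Longrightarrow> Def I B k \<subseteq> Def I C k"
  unfolding Def_def by blast

lemma Def_top: "tuples k \<in> Def I B k"
proof -
  let ?\<phi> = "Ex 0 (Eq (Var 0) (Var 0)) :: ('r,'u) fm"
  have "tuples k = {v. length v = k \<and> sat I (\<lambda>i. v ! i) ?\<phi>}" by (auto simp: tuples_def)
  moreover have "params ?\<phi> \<subseteq> B \<and> fv ?\<phi> \<subseteq> {..<k}" by simp
  ultimately show ?thesis unfolding Def_def by blast
qed

lemma Def_compl: "X \<in> Def I B k \<Longrightarrow> tuples k - X \<in> Def I B k"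
proof -
  assume "X \<in> Def I B k"
  then obtain \<phi> where X: "X = {v. length v = k \<and> sat I (\<lambda>i. v ! i) \<phi>}" "params \<phi> \<subseteq> B" "fv \<phi> \<subseteq> {..<k}"
    by (auto simp: Def_def)
  have "tuples k - X = {v. length v = k \<and> sat I (\<lambda>i. v ! i) (Neg \<phi>)}" using X by (auto simp: tuples_def)
  then show ?thesis using X unfolding Def_def by (intro CollectI exI[of _ "Neg \<phi>"]) auto
qed

lemma Def_Int: "X \<in> Def I B k \<Longrightarrow> Y \<in> Def I B k \<Longrightarrow> X \<inter> Y \<in> Def I B k"
proof -
  assume "X \<in> Def I B k" "Y \<in> Def I B k"
  then obtain \<phi> \<psi> where X: "X = {v. length v = k \<and> sat I (\<lambda>i. v ! i) \<phi>}" "params \<phi> \<subseteq> B" "fv \<phi> \<subseteq> {..<k}"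
    and Y: "Y = {v. length v = k \<and> sat I (\<lambda>i. v ! i) \<psi>}" "params \<psi> \<subseteq> B" "fv \<psi> \<subseteq> {..<k}"
    by (auto simp: Def_def)
  have "X \<inter> Y = {v. length v = k \<and> sat I (\<lambda>i. v ! i) (Conj \<phi> \<psi>)}" unfolding X(1) Y(1) by auto
  then show ?thesis using X Y unfolding Def_def by (intro CollectI exI[of _ "Conj \<phi> \<psi>"]) auto
qed

lemma Def_algebra: "algebra (tuples k) (Def I B k)"
proof -
  have "tuples k - (tuples k - tuples k) \<in> Def I B k" using Def_compl Def_top by blast
  then have "{} \<in> Def I B k" using Def_compl Def_top by (metis Diff_cancel)
  moreover have "Def I B k \<subseteq> Pow (tuples k)" using Def_sub by blast
  ultimately show ?thesis unfolding algebra_iff_Int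
    by (auto intro: Def_compl Def_Int)
qed

lemma mem_prodset: "X \<subseteq> tuples n \<Longrightarrow>
   u \<in> prodset X Y \<longleftrightarrow> n \<le> length u \<and> take n u \<in> X \<and> drop n u \<in> Y"
  unfolding prodset_def tuples_def
  by (auto, metis append_take_drop_id) 

lemma tuples_len[simp]: "u \<in> tuples k \<longleftrightarrow> length u = k"
  by (simp add: tuples_def)

lemma mem_prodset_t: "u \<in> prodset (tuples n) Y \<longleftrightarrow> n \<le> length u \<and> drop n u \<in> Y"
  using mem_prodset[of "tuples n" n u Y] by auto

lemma prodset_tuples: "prodset (tuples n) (tuples m) = tuples (n + m)"
  by (auto simp: mem_prodset_t)

lemma Def_cylx: "X \<in> Def I B n \<Longrightarrow> prodset X (tuples m) \<in> Def I B (n + m)"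
proof -
  assume "X \<in> Def I B n"
  then obtain \<phi> where X: "X = {v. length v = n \<and> sat I (\<lambda>i. v ! i) \<phi>}" "params \<phi> \<subseteq> B" "fv \<phi> \<subseteq> {..<n}"
    by (auto simp: Def_def)
  have sub: "X \<subseteq> tuples n" using X(1) by auto
  have cong: "\<And>u. length u = n + m \<Longrightarrow> sat I (\<lambda>i. take n u ! i) \<phi> = sat I (\<lambda>i. u ! i) \<phi>"
    using X(3) by (intro sat_cong) auto
  have "u \<in> prodset X (tuples m) \<longleftrightarrow> length u = n + m \<and> sat I (\<lambda>i. u ! i) \<phi>" for u
  proof -
    have "u \<in> prodset X (tuples m) \<longleftrightarrow> n \<le> length u \<and> take n u \<in> X \<and> length (drop n u) = m"
      by (simp add: mem_prodset[OF sub])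
    also have "\<dots> \<longleftrightarrow> length u = n + m \<and> sat I (\<lambda>i. take n u ! i) \<phi>" using X(1) by auto
    also have "\<dots> \<longleftrightarrow> length u = n + m \<and> sat I (\<lambda>i. u ! i) \<phi>" using cong by blast
    finally show ?thesis .
  qed
  then have "prodset X (tuples m) = {u. length u = n + m \<and> sat I (\<lambda>i. u ! i) \<phi>}" by blast
  then show ?thesis using X unfolding Def_def by (intro CollectI exI[of _ \<phi>]) auto
qed

lemma Def_cyly: "Y \<in> Def I B m \<Longrightarrow> prodset (tuples n) Y \<in> Def I B (n + m)"
proof -
  assume "Y \<in> Def I B m"
  then obtain \<phi> where Y: "Y = {v. length v = m \<and> sat I (\<lambda>i. v ! i) \<phi>}" "params \<phi> \<subseteq> B" "fv \<phi> \<subseteq> {..<m}"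
    by (auto simp: Def_def)
  have cong: "\<And>u. length u = n + m \<Longrightarrow> sat I (\<lambda>i. drop n u ! i) \<phi> = sat I (\<lambda>i. u ! (i + n)) \<phi>"
    using Y(3) by (intro sat_cong ballI) (auto simp: nth_drop add.commute)
  have "u \<in> prodset (tuples n) Y \<longleftrightarrow> length u = n + m \<and> sat I (\<lambda>i. u ! i) (shift n \<phi>)" for u
  proof -
    have "u \<in> prodset (tuples n) Y \<longleftrightarrow> n \<le> length u \<and> drop n u \<in> Y"
      by (simp add: mem_prodset_t)
    also have "\<dots> \<longleftrightarrow> length u = n + m \<and> sat I (\<lambda>i. drop n u ! i) \<phi>" using Y(1) by auto
    also have "\<dots> \<longleftrightarrow> length u = n + m \<and> sat I (\<lambda>i. u ! (i + n)) \<phi>" using cong by blast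
    finally show ?thesis by (simp add: sat_shift)
  qed
  then have "prodset (tuples n) Y = {u. length u = n + m \<and> sat I (\<lambda>i. u ! i) (shift n \<phi>)}" by blast
  moreover have "fv (shift n \<phi>) \<subseteq> {..<n+m}" using Y(3) by (auto simp: fv_shift)
  ultimately show ?thesis using Y unfolding Def_def by (intro CollectI exI[of _ "shift n \<phi>"]) (auto simp: params_shift)
qed

definition projx :: "nat \<Rightarrow> nat \<Rightarrow> 'u list set \<Rightarrow> 'u list set" where
  "projx n m Z = {v. length v = n \<and> (\<exists>w. length w = m \<and> v @ w \<in> Z)}"

lemma Def_projx: "Z \<in> Def I B (n + m) \<Longrightarrow> projx n m Z \<in> Def I B n"
proof -
  assume "Z \<in> Def I B (n + m)"
  then obtain \<phi> where Z: "Z = {v. length v = n + m \<and> sat I (\<lambda>i. v ! i) \<phi>}" "params \<phi> \<subseteq> B" "fv \<phi> \<subseteq> {..<n + m}"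
    by (auto simp: Def_def)
  have "\<And>v w. length v = n \<Longrightarrow> length w = m \<Longrightarrow>
     sat I (\<lambda>i. if n \<le> i \<and> i < n + m then w ! (i - n) else v ! i) \<phi> = sat I (\<lambda>i. (v @ w) ! i) \<phi>"
    using Z(3) by (intro sat_cong) (auto simp: nth_append)
  then have "projx n m Z = {v. length v = n \<and> sat I (\<lambda>i. v ! i) (exs n m \<phi>)}"
    using Z(1) by (auto simp: projx_def sat_exs)
  moreover have "fv (exs n m \<phi>) \<subseteq> {..<n}" using Z(3) by (auto simp: fv_exs)
  ultimately show ?thesis using Z unfolding Def_def by (intro CollectI exI[of _ "exs n m \<phi>"]) (auto simp: params_exs)
qed




definition ismeas :: "'a set \<Rightarrow> 'a set set \<Rightarrow> ('a set \<Rightarrow> real) \<Rightarrow> bool" where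
  "ismeas \<Omega> M m \<longleftrightarrow> m \<Omega> = 1 \<and> (\<forall>X\<in>M. 0 \<le> m X)
     \<and> (\<forall>X\<in>M. \<forall>Y\<in>M. X \<inter> Y = {} \<longrightarrow> m (X \<union> Y) = m X + m Y)"

lemma is_measure_eq: "is_measure I B k m = ismeas (tuples k) (Def I B k) m"
  by (simp add: is_measure_def ismeas_def)

lemma alg_empty: assumes "algebra \<Omega> M" shows "{} \<in> M"
proof - interpret algebra \<Omega> M by fact show ?thesis by simp qed
lemma alg_top: assumes "algebra \<Omega> M" shows "\<Omega> \<in> M"
proof - interpret algebra \<Omega> M by fact show ?thesis by simp qed
lemma alg_compl: assumes "algebra \<Omega> M" "a \<in> M" shows "\<Omega> - a \<in> M"
proof - interpret algebra \<Omega> M by fact show ?thesis using assms(2) by (rule compl_sets) qed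
lemma alg_Int: assumes "algebra \<Omega> M" "a \<in> M" "b \<in> M" shows "a \<inter> b \<in> M"
proof - interpret algebra \<Omega> M by fact show ?thesis using assms(2,3) by (rule Int) qed
lemma alg_sub: assumes "algebra \<Omega> M" "a \<in> M" shows "a \<subseteq> \<Omega>"
proof - interpret algebra \<Omega> M by fact show ?thesis using assms(2) by (rule sets_into_space) qed
lemma alg_Un: assumes "algebra \<Omega> M" "a \<in> M" "b \<in> M" shows "a \<union> b \<in> M"
proof - interpret algebra \<Omega> M by fact show ?thesis using assms(2,3) by (rule Un) qed
lemma alg_Diff: assumes "algebra \<Omega> M" "a \<in> M" "b \<in> M" shows "a - b \<in> M"
proof - interpret algebra \<Omega> M by fact show ?thesis using assms(2,3) by (rule Diff) qed

lemma meas_empty: assumes "algebra \<Omega> M" "ismeas \<Omega> M m" shows "m {} = 0"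
proof -
  have "m ({} \<union> {}) = m {} + m {}" using assms alg_empty[OF assms(1)] unfolding ismeas_def by blast
  then show ?thesis by simp
qed

lemma meas_add: "ismeas \<Omega> M m \<Longrightarrow> X \<in> M \<Longrightarrow> Y \<in> M \<Longrightarrow> X \<inter> Y = {} \<Longrightarrow> m (X \<union> Y) = m X + m Y"
  unfolding ismeas_def by blast

lemma meas_nonneg: "ismeas \<Omega> M m \<Longrightarrow> X \<in> M \<Longrightarrow> 0 \<le> m X"
  unfolding ismeas_def by blast

lemma meas_split: assumes "algebra \<Omega> M" "ismeas \<Omega> M m" "X \<in> M" "S \<in> M"
  shows "m X = m (X \<inter> S) + m (X - S)"
proof -
  have e: "X = (X \<inter> S) \<union> (X - S)" by blast
  have "X \<inter> S \<in> M" by (rule alg_Int[OF assms(1,3,4)])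
  moreover have "X - S \<in> M" by (rule alg_Diff[OF assms(1,3,4)])
  moreover have "(X \<inter> S) \<inter> (X - S) = {}" by blast
  ultimately have "m ((X \<inter> S) \<union> (X - S)) = m (X \<inter> S) + m (X - S)" by (rule meas_add[OF assms(2)])
  then show ?thesis using e by simp
qed

lemma meas_mono: assumes "algebra \<Omega> M" "ismeas \<Omega> M m" "X \<in> M" "Y \<in> M" "X \<subseteq> Y"
  shows "m X \<le> m Y"
proof -
  have "m Y = m (Y \<inter> X) + m (Y - X)" by (rule meas_split[OF assms(1,2,4,3)])
  moreover have "Y \<inter> X = X" using assms(5) by blast
  moreover have "0 \<le> m (Y - X)" by (rule meas_nonneg[OF assms(2) alg_Diff[OF assms(1,4,3)]])
  ultimately show ?thesis by simp
qed

lemma meas_sum: assumes "algebra \<Omega> M" "ismeas \<Omega> M m" "finite J"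
  shows "(\<forall>j\<in>J. K j \<in> M) \<Longrightarrow> (\<forall>i\<in>J. \<forall>j\<in>J. i \<noteq> j \<longrightarrow> K i \<inter> K j = {}) \<Longrightarrow>
    (\<Union>j\<in>J. K j) \<in> M \<and> m (\<Union>j\<in>J. K j) = (\<Sum>j\<in>J. m (K j))"
  using assms(3)
proof (induction J rule: finite_induct)
  case empty
  then show ?case using meas_empty[OF assms(1,2)] alg_empty[OF assms(1)] by simp
next
  case (insert j J)
  have p1: "\<forall>i\<in>J. K i \<in> M" using insert.prems(1) by simp
  have p2: "\<forall>i\<in>J. \<forall>k\<in>J. i \<noteq> k \<longrightarrow> K i \<inter> K k = {}" using insert.prems(2) by simp
  have IH: "(\<Union>j\<in>J. K j) \<in> M" "m (\<Union>j\<in>J. K j) = (\<Sum>j\<in>J. m (K j))"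
    using insert.IH[OF p1 p2] by auto
  have d: "K j \<inter> (\<Union>j\<in>J. K j) = {}"
  proof -
    { fix i assume i: "i \<in> J"
      then have "i \<noteq> j" using insert.hyps(2) by auto
      then have "K j \<inter> K i = {}" using insert.prems(2) i by simp }
    then show ?thesis by blast
  qed
  have kj: "K j \<in> M" using insert.prems(1) by simp
  have "(\<Union>j\<in>insert j J. K j) = K j \<union> (\<Union>j\<in>J. K j)" by simp
  then show ?case using IH d meas_add[OF assms(2) kj IH(1) d] alg_Un[OF assms(1) kj IH(1)] insert.hyps
    by simp
qed

lemma part_sum:
  assumes "algebra \<Omega> M" "ismeas \<Omega> M m" "finite J" "\<forall>j\<in>J. K j \<in> M"
    "\<forall>i\<in>J. \<forall>j\<in>J. i \<noteq> j \<longrightarrow> K i \<inter> K j = {}" "\<Omega> \<subseteq> (\<Union>j\<in>J. K j)"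
    "Y \<in> M" "V \<in> M" "\<forall>j\<in>J. K j \<subseteq> V \<or> K j \<inter> V = {}"
  shows "(\<Sum>j\<in>J. if K j \<subseteq> V then m (Y \<inter> K j) else 0) = m (Y \<inter> V)"
proof -
  let ?J = "{j\<in>J. K j \<subseteq> V}"
  have "(\<Sum>j\<in>J. if K j \<subseteq> V then m (Y \<inter> K j) else 0) = (\<Sum>j\<in>?J. m (Y \<inter> K j))"
    using assms(3) by (simp add: sum.inter_filter)
  also have "\<dots> = m (\<Union>j\<in>?J. Y \<inter> K j)"
  proof -
    have fin: "finite ?J" using assms(3) by simp
    have "\<forall>j\<in>?J. Y \<inter> K j \<in> M" using assms(4,7) alg_Int[OF assms(1)] by blast
    moreover have "\<forall>i\<in>?J. \<forall>j\<in>?J. i \<noteq> j \<longrightarrow> (Y \<inter> K i) \<inter> (Y \<inter> K j) = {}" using assms(5) by blast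
    ultimately show ?thesis using meas_sum[OF assms(1,2) fin, of "\<lambda>j. Y \<inter> K j"] by simp
  qed
  also have "(\<Union>j\<in>?J. Y \<inter> K j) = Y \<inter> V"
  proof
    show "(\<Union>j\<in>?J. Y \<inter> K j) \<subseteq> Y \<inter> V" by blast
    show "Y \<inter> V \<subseteq> (\<Union>j\<in>?J. Y \<inter> K j)"
    proof
      fix x assume x: "x \<in> Y \<inter> V"
      then have "x \<in> \<Omega>" using alg_sub[OF assms(1) assms(7)] by blast
      then obtain j where j: "j \<in> J" "x \<in> K j" using assms(6) by blast
      then have "K j \<subseteq> V" using assms(9) x by blast
      then show "x \<in> (\<Union>j\<in>?J. Y \<inter> K j)" using j x by blast
    qed
  qed
  finally show ?thesis .
qed

lemma part_sum_all:
  assumes "algebra \<Omega> M" "ismeas \<Omega> M m" "finite J" "\<forall>j\<in>J. K j \<in> M"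
    "\<forall>i\<in>J. \<forall>j\<in>J. i \<noteq> j \<longrightarrow> K i \<inter> K j = {}" "\<Omega> \<subseteq> (\<Union>j\<in>J. K j)" "Y \<in> M"
  shows "(\<Sum>j\<in>J. m (Y \<inter> K j)) = m Y"
proof -
  have "\<forall>j\<in>J. K j \<subseteq> \<Omega>" using assms(4) alg_sub[OF assms(1)] by blast
  then have "(\<Sum>j\<in>J. if K j \<subseteq> \<Omega> then m (Y \<inter> K j) else 0) = (\<Sum>j\<in>J. m (Y \<inter> K j))" by simp
  moreover have "Y \<inter> \<Omega> = Y" using alg_sub[OF assms(1) assms(7)] by blast
  ultimately show ?thesis using part_sum[OF assms(1-7) alg_top[OF assms(1)]] \<open>\<forall>j\<in>J. K j \<subseteq> \<Omega>\<close> by simp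
qed

section \<open>Atoms\<close>

definition atoms :: "'a set \<Rightarrow> 'a set set \<Rightarrow> 'a set set" where
  "atoms \<Omega> G = (\<lambda>R. {x\<in>\<Omega>. \<forall>g\<in>G. (x \<in> g) = (g \<in> R)}) ` Pow G"

lemma atoms_finite: "finite G \<Longrightarrow> finite (atoms \<Omega> G)"
  unfolding atoms_def by simp

lemma atoms_sub: "a \<in> atoms \<Omega> G \<Longrightarrow> a \<subseteq> \<Omega>"
  unfolding atoms_def by auto

lemma atoms_disj: "a \<in> atoms \<Omega> G \<Longrightarrow> a' \<in> atoms \<Omega> G \<Longrightarrow> a \<noteq> a' \<Longrightarrow> a \<inter> a' = {}"
proof -
  assume "a \<in> atoms \<Omega> G" "a' \<in> atoms \<Omega> G" "a \<noteq> a'"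
  then obtain R R' where R: "R \<subseteq> G" "a = {x\<in>\<Omega>. \<forall>g\<in>G. (x \<in> g) = (g \<in> R)}"
    and R': "R' \<subseteq> G" "a' = {x\<in>\<Omega>. \<forall>g\<in>G. (x \<in> g) = (g \<in> R')}"
    unfolding atoms_def by auto
  show "a \<inter> a' = {}"
  proof (rule ccontr)
    assume "a \<inter> a' \<noteq> {}"
    then obtain x where "x \<in> a" "x \<in> a'" by blast
    then have "\<forall>g\<in>G. (g \<in> R) = (g \<in> R')" using R R' by auto
    then have "R = R'" using R(1) R'(1) by blast
    then show False using R R' \<open>a \<noteq> a'\<close> by simp
  qed
qed

lemma atoms_cover: assumes "x \<in> \<Omega>" shows "\<exists>a\<in>atoms \<Omega> G. x \<in> a"
proof -
  let ?R = "{g\<in>G. x \<in> g}"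
  let ?a = "{y\<in>\<Omega>. \<forall>g\<in>G. (y \<in> g) = (g \<in> ?R)}"
  have "?a \<in> atoms \<Omega> G" unfolding atoms_def by (rule image_eqI[of _ _ ?R]) auto
  moreover have "x \<in> ?a" using assms by auto
  ultimately show ?thesis by (rule rev_bexI)
qed

lemma atoms_compat: "a \<in> atoms \<Omega> G \<Longrightarrow> g \<in> G \<Longrightarrow> a \<subseteq> g \<or> a \<inter> g = {}"
  unfolding atoms_def by auto

lemma atoms_in_alg:
  assumes "algebra \<Omega> M" "finite G" "G \<subseteq> M"
  shows "atoms \<Omega> G \<subseteq> M"
proof -
  have "\<forall>R. {x\<in>\<Omega>. \<forall>g\<in>G. (x \<in> g) = (g \<in> R)} \<in> M"
    using assms(2,3)
  proof (induction G rule: finite_induct)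
    case empty
    then show ?case using alg_top[OF assms(1)] by simp
  next
    case (insert h G)
    show ?case
    proof
      fix R
      have "{x\<in>\<Omega>. \<forall>g\<in>insert h G. (x \<in> g) = (g \<in> R)} =
          {x\<in>\<Omega>. \<forall>g\<in>G. (x \<in> g) = (g \<in> R)} \<inter> (if h \<in> R then h else \<Omega> - h)"
        using alg_sub[OF assms(1), of h] insert.prems by auto
      moreover have "(if h \<in> R then h else \<Omega> - h) \<in> M" using insert.prems alg_compl[OF assms(1)] by auto
      ultimately show "{x\<in>\<Omega>. \<forall>g\<in>insert h G. (x \<in> g) = (g \<in> R)} \<in> M"
        using insert alg_Int[OF assms(1)] by auto
    qed
  qed
  then show ?thesis unfolding atoms_def by auto
qed




lemma cyl_mem: "X \<subseteq> tuples n \<Longrightarrow> u \<in> prodset X (tuples m) \<longleftrightarrow> length u = n + m \<and> take n u \<in> X"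
  by (auto simp: mem_prodset)

lemma atoms_cover': "\<Omega> \<subseteq> (\<Union>j\<in>atoms \<Omega> G. j)"
proof
  fix x assume "x \<in> \<Omega>"
  from atoms_cover[where G=G, OF this] obtain a where "a \<in> atoms \<Omega> G" "x \<in> a" by (elim bexE)
  then show "x \<in> (\<Union>j\<in>atoms \<Omega> G. j)" by (rule UN_I)
qed

lemma atoms_disj': "\<forall>i\<in>atoms \<Omega> G. \<forall>j\<in>atoms \<Omega> G. i \<noteq> j \<longrightarrow> i \<inter> j = {}"
  by (intro ballI impI) (rule atoms_disj)

lemma FIN:
  fixes I :: "'r \<Rightarrow> 'u list \<Rightarrow> bool" and A :: "'u set" and n m :: nat
    and \<mu> l :: "'u list set \<Rightarrow> real" and F :: "'u list set set"
  assumes mu: "ismeas (tuples n) (Def I UNIV n) \<mu>"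
    and l: "ismeas (tuples (n + m)) (Def I A (n + m)) l"
    and lmu: "\<forall>X\<in>Def I A n. l (prodset X (tuples m)) = \<mu> X"
    and finF: "finite F"
  shows "\<exists>\<omega>. (\<forall>W. 0 \<le> \<omega> W \<and> \<omega> W \<le> 1) \<and> \<omega> (tuples (n + m)) = 1
     \<and> (\<forall>W1 W2. W1 \<inter> W2 = {} \<longrightarrow> \<omega> (W1 \<union> W2) = \<omega> W1 + \<omega> W2)
     \<and> (\<forall>Z\<in>F \<inter> Def I A (n + m). \<omega> Z = l Z)
     \<and> (\<forall>X\<in>F \<inter> Def I UNIV n. \<omega> (prodset X (tuples m)) = \<mu> X)"
proof -
  have algA: "algebra (tuples (n + m)) (Def I A (n + m))" by (rule Def_algebra)
  have algAn: "algebra (tuples n) (Def I A n)" by (rule Def_algebra)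
  have algU: "algebra (tuples n) (Def I UNIV n)" by (rule Def_algebra)
  have DAU: "Def I A n \<subseteq> Def I UNIV n" by (rule Def_mono) simp
  define cyl :: "'u list set \<Rightarrow> 'u list set" where "cyl X = prodset X (tuples m)" for X
  define aa where "aa = atoms (tuples (n + m)) (F \<inter> Def I A (n + m))"
  define bb where "bb = atoms (tuples n) (projx n m ` aa)"
  define cc where "cc = atoms (tuples n) (F \<inter> Def I UNIV n)"
  have fin_aa: "finite aa" unfolding aa_def using finF by (simp add: atoms_finite)
  have fin_bb: "finite bb" unfolding bb_def using fin_aa by (simp add: atoms_finite)
  have fin_cc: "finite cc" unfolding cc_def using finF by (simp add: atoms_finite)
  have aa_sub: "aa \<subseteq> Def I A (n + m)" unfolding aa_def
    by (rule atoms_in_alg[OF algA]) (use finF in auto)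
  have proj_sub: "projx n m ` aa \<subseteq> Def I A n" using aa_sub Def_projx by blast
  have bb_subA: "bb \<subseteq> Def I A n" unfolding bb_def
    by (rule atoms_in_alg[OF algAn]) (use fin_aa proj_sub in auto)
  have bb_sub: "bb \<subseteq> Def I UNIV n" using bb_subA DAU by blast
  have cc_sub: "cc \<subseteq> Def I UNIV n" unfolding cc_def
    by (rule atoms_in_alg[OF algU]) (use finF in auto)
  have bb_tup: "b \<subseteq> tuples n" if "b \<in> bb" for b using that atoms_sub unfolding bb_def by blast
  have cc_tup: "c \<subseteq> tuples n" if "c \<in> cc" for c using that atoms_sub unfolding cc_def by blast
  have cylA: "cyl b \<in> Def I A (n + m)" if "b \<in> bb" for b
    unfolding cyl_def using that bb_subA Def_cylx by blast
  have acylA: "a \<inter> cyl b \<in> Def I A (n + m)" if "a \<in> aa" "b \<in> bb" for a b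
    using alg_Int[OF algA] aa_sub cylA that by blast
  have bcU: "b \<inter> c \<in> Def I UNIV n" if "b \<in> bb" "c \<in> cc" for b c
    using alg_Int[OF algU] bb_sub cc_sub that by blast
  have mu0: "\<mu> {} = 0" by (rule meas_empty[OF algU mu])
  have l0: "l {} = 0" by (rule meas_empty[OF algA l])
  have mub: "\<mu> b = l (cyl b)" if "b \<in> bb" for b using lmu bb_subA that unfolding cyl_def by auto

  define wt where "wt a b c = l (a \<inter> cyl b) * \<mu> (b \<inter> c) / \<mu> b" for a b c
  define pt where "pt a b c = (SOME u. u \<in> a \<inter> cyl (b \<inter> c))" for a b c
  define ind :: "'u list set \<Rightarrow> 'u list \<Rightarrow> real" where "ind W u = (if u \<in> W then 1 else 0)" for W u
  define \<omega> where "\<omega> W = (\<Sum>a\<in>aa. \<Sum>b\<in>bb. \<Sum>c\<in>cc. wt a b c * ind W (pt a b c))" for W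

  have wt_nonneg: "0 \<le> wt a b c" if "a \<in> aa" "b \<in> bb" "c \<in> cc" for a b c
  proof -
    have "0 \<le> l (a \<inter> cyl b)" using meas_nonneg[OF l acylA[OF that(1,2)]] .
    moreover have "0 \<le> \<mu> (b \<inter> c)" using meas_nonneg[OF mu bcU[OF that(2,3)]] .
    moreover have "0 \<le> \<mu> b" using meas_nonneg[OF mu] bb_sub that(2) by blast
    ultimately show ?thesis unfolding wt_def by simp
  qed

  have wt_pt: "pt a b c \<in> a \<and> length (pt a b c) = n + m \<and> take n (pt a b c) \<in> b \<and> take n (pt a b c) \<in> c"
    if abc: "a \<in> aa" "b \<in> bb" "c \<in> cc" and nz: "wt a b c \<noteq> 0" for a b c
  proof -
    have l1: "l (a \<inter> cyl b) \<noteq> 0" and m1: "\<mu> (b \<inter> c) \<noteq> 0" using nz unfolding wt_def by auto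
    have "a \<inter> cyl b \<noteq> {}" using l1 l0 by auto
    then obtain u where u: "u \<in> a" "u \<in> cyl b" by blast
    then have ul: "length u = n + m" "take n u \<in> b" using cyl_mem[OF bb_tup[OF abc(2)]] unfolding cyl_def by auto
    have "take n u \<in> projx n m a" unfolding projx_def
      using ul u(1) by (intro CollectI conjI exI[of _ "drop n u"]) auto
    moreover have "projx n m a \<in> projx n m ` aa" using abc(1) by blast
    ultimately have bsub: "b \<subseteq> projx n m a"
      using atoms_compat[of b "tuples n" "projx n m ` aa"] abc(2) ul(2) unfolding bb_def by blast
    have "b \<inter> c \<noteq> {}" using m1 mu0 by auto
    then obtain x where x: "x \<in> b" "x \<in> c" by blast
    then have "x \<in> projx n m a" using bsub by blast
    then obtain w where w: "length w = m" "x @ w \<in> a" unfolding projx_def by blast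
    have xl: "length x = n" using x(1) bb_tup[OF abc(2)] by auto
    have bc_tup: "b \<inter> c \<subseteq> tuples n" using bb_tup[OF abc(2)] by blast
    have "x @ w \<in> a \<inter> cyl (b \<inter> c)" unfolding cyl_def
      using cyl_mem[OF bc_tup] w xl x by auto
    then have "pt a b c \<in> a \<inter> cyl (b \<inter> c)" unfolding pt_def by (rule someI)
    then show ?thesis using cyl_mem[OF bc_tup] unfolding cyl_def by auto
  qed

  have S1: "(\<Sum>c\<in>cc. \<mu> (b \<inter> c)) = \<mu> b" if "b \<in> bb" for b
  proof -
    have "(\<Sum>c\<in>cc. \<mu> (b \<inter> (\<lambda>c. c) c)) = \<mu> b"
    proof (rule part_sum_all[OF algU mu fin_cc])
      show "\<forall>j\<in>cc. j \<in> Def I UNIV n" using cc_sub by auto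
      show "\<forall>i\<in>cc. \<forall>j\<in>cc. i \<noteq> j \<longrightarrow> i \<inter> j = {}" unfolding cc_def by (rule atoms_disj')
      show "tuples n \<subseteq> (\<Union>j\<in>cc. j)" unfolding cc_def by (rule atoms_cover')
      show "b \<in> Def I UNIV n" using bb_sub that by blast
    qed
    then show ?thesis by simp
  qed

  have S2: "(\<Sum>c\<in>cc. if c \<subseteq> X then \<mu> (b \<inter> c) else 0) = \<mu> (b \<inter> X)"
    if "b \<in> bb" "X \<in> Def I UNIV n" "\<forall>c\<in>cc. c \<subseteq> X \<or> c \<inter> X = {}" for b X
  proof -
    have "(\<Sum>c\<in>cc. if (\<lambda>c. c) c \<subseteq> X then \<mu> (b \<inter> (\<lambda>c. c) c) else 0) = \<mu> (b \<inter> X)"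
    proof (rule part_sum[OF algU mu fin_cc])
      show "\<forall>j\<in>cc. j \<in> Def I UNIV n" using cc_sub by auto
      show "\<forall>i\<in>cc. \<forall>j\<in>cc. i \<noteq> j \<longrightarrow> i \<inter> j = {}" unfolding cc_def by (rule atoms_disj')
      show "tuples n \<subseteq> (\<Union>j\<in>cc. j)" unfolding cc_def by (rule atoms_cover')
      show "b \<in> Def I UNIV n" using bb_sub that by blast
      show "X \<in> Def I UNIV n" by fact
      show "\<forall>j\<in>cc. j \<subseteq> X \<or> j \<inter> X = {}" using that(3) by simp
    qed
    then show ?thesis by simp
  qed

  have S3: "(\<Sum>b\<in>bb. \<mu> (X \<inter> b)) = \<mu> X" if "X \<in> Def I UNIV n" for X
  proof -
    have "(\<Sum>b\<in>bb. \<mu> (X \<inter> (\<lambda>c. c) b)) = \<mu> X"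
    proof (rule part_sum_all[OF algU mu fin_bb])
      show "\<forall>j\<in>bb. j \<in> Def I UNIV n" using bb_sub by auto
      show "\<forall>i\<in>bb. \<forall>j\<in>bb. i \<noteq> j \<longrightarrow> i \<inter> j = {}" unfolding bb_def by (rule atoms_disj')
      show "tuples n \<subseteq> (\<Union>j\<in>bb. j)" unfolding bb_def by (rule atoms_cover')
      show "X \<in> Def I UNIV n" by fact
    qed
    then show ?thesis by simp
  qed

  have S4: "(\<Sum>b\<in>bb. l (a \<inter> cyl b)) = l a" if "a \<in> aa" for a
  proof (rule part_sum_all[OF algA l fin_bb])
    show "\<forall>j\<in>bb. cyl j \<in> Def I A (n + m)" using cylA by auto
    show "\<forall>i\<in>bb. \<forall>j\<in>bb. i \<noteq> j \<longrightarrow> cyl i \<inter> cyl j = {}"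
    proof (intro ballI impI)
      fix i j assume ij: "i \<in> bb" "j \<in> bb" "i \<noteq> j"
      then have "i \<inter> j = {}" unfolding bb_def by (rule atoms_disj)
      then show "cyl i \<inter> cyl j = {}" unfolding cyl_def
        using cyl_mem[OF bb_tup[OF ij(1)]] cyl_mem[OF bb_tup[OF ij(2)]] by blast
    qed
    show "tuples (n + m) \<subseteq> (\<Union>j\<in>bb. cyl j)"
    proof
      fix u :: "'u list" assume u: "u \<in> tuples (n + m)"
      then have "take n u \<in> tuples n" by simp
      then have "take n u \<in> (\<Union>j\<in>bb. j)" unfolding bb_def by (rule subsetD[OF atoms_cover'])
      then obtain b where b: "b \<in> bb" "take n u \<in> b" by blast
      then have "u \<in> cyl b" unfolding cyl_def using cyl_mem[OF bb_tup[OF b(1)]] u by simp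
      then show "u \<in> (\<Union>j\<in>bb. cyl j)" using b(1) by blast
    qed
    show "a \<in> Def I A (n + m)" using aa_sub that by blast
  qed

  have S5: "(\<Sum>a\<in>aa. l (a \<inter> cyl b)) = \<mu> b" if "b \<in> bb" for b
  proof -
    have "(\<Sum>a\<in>aa. l (cyl b \<inter> (\<lambda>c. c) a)) = l (cyl b)"
    proof (rule part_sum_all[OF algA l fin_aa])
      show "\<forall>j\<in>aa. j \<in> Def I A (n + m)" using aa_sub by auto
      show "\<forall>i\<in>aa. \<forall>j\<in>aa. i \<noteq> j \<longrightarrow> i \<inter> j = {}" unfolding aa_def by (rule atoms_disj')
      show "tuples (n + m) \<subseteq> (\<Union>j\<in>aa. j)" unfolding aa_def by (rule atoms_cover')
      show "cyl b \<in> Def I A (n + m)" using cylA that by blast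
    qed
    then show ?thesis using mub[OF that] by (simp add: Int_commute)
  qed

  have S6: "(\<Sum>a\<in>aa. if a \<subseteq> Z then l a else 0) = l Z" if Z: "Z \<in> F \<inter> Def I A (n + m)" for Z
  proof -
    have "(\<Sum>a\<in>aa. if (\<lambda>c. c) a \<subseteq> Z then l (Z \<inter> (\<lambda>c. c) a) else 0) = l (Z \<inter> Z)"
    proof (rule part_sum[OF algA l fin_aa])
      show "\<forall>j\<in>aa. j \<in> Def I A (n + m)" using aa_sub by auto
      show "\<forall>i\<in>aa. \<forall>j\<in>aa. i \<noteq> j \<longrightarrow> i \<inter> j = {}" unfolding aa_def by (rule atoms_disj')
      show "tuples (n + m) \<subseteq> (\<Union>j\<in>aa. j)" unfolding aa_def by (rule atoms_cover')
      show "Z \<in> Def I A (n + m)" using Z by blast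
      show "Z \<in> Def I A (n + m)" using Z by blast
      show "\<forall>j\<in>aa. j \<subseteq> Z \<or> j \<inter> Z = {}" unfolding aa_def using atoms_compat Z by blast
    qed
    moreover have "\<And>a. a \<subseteq> Z \<Longrightarrow> Z \<inter> a = a" by blast
    ultimately show ?thesis by (simp cong: if_cong)
  qed

  have I1: "(\<Sum>c\<in>cc. wt a b c) = l (a \<inter> cyl b)" if ab: "a \<in> aa" "b \<in> bb" for a b
  proof (cases "\<mu> b = 0")
    case True
    have "l (a \<inter> cyl b) \<le> l (cyl b)" by (rule meas_mono[OF algA l acylA[OF ab] cylA[OF ab(2)]]) blast
    moreover have "0 \<le> l (a \<inter> cyl b)" by (rule meas_nonneg[OF l acylA[OF ab]])
    ultimately have "l (a \<inter> cyl b) = 0" using True mub[OF ab(2)] by simp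
    then show ?thesis unfolding wt_def by simp
  next
    case False
    have "(\<Sum>c\<in>cc. wt a b c) = (l (a \<inter> cyl b) / \<mu> b) * (\<Sum>c\<in>cc. \<mu> (b \<inter> c))"
      unfolding wt_def by (simp add: sum_distrib_left)
    also have "\<dots> = l (a \<inter> cyl b)" using S1[OF ab(2)] False by simp
    finally show ?thesis .
  qed

  have T1: "wt a b c * ind Z (pt a b c) = wt a b c * (if a \<subseteq> Z then 1 else 0)"
    if "a \<in> aa" "b \<in> bb" "c \<in> cc" "Z \<in> F \<inter> Def I A (n + m)" for a b c Z
  proof (cases "wt a b c = 0")
    case False
    then have "pt a b c \<in> a" using wt_pt that by blast
    moreover have "a \<subseteq> Z \<or> a \<inter> Z = {}" using atoms_compat that(1,4) unfolding aa_def by blast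
    ultimately show ?thesis unfolding ind_def by auto
  qed simp

  have T2: "wt a b c * ind (cyl X) (pt a b c) = wt a b c * (if c \<subseteq> X then 1 else 0)"
    if "a \<in> aa" "b \<in> bb" "c \<in> cc" "X \<subseteq> tuples n" "c \<subseteq> X \<or> c \<inter> X = {}" for a b c X
  proof (cases "wt a b c = 0")
    case False
    then have "length (pt a b c) = n + m" "take n (pt a b c) \<in> c" using wt_pt that by blast+
    then have "pt a b c \<in> cyl X \<longleftrightarrow> c \<subseteq> X" unfolding cyl_def
      using cyl_mem[OF that(4)] that(5) by blast
    then show ?thesis unfolding ind_def by auto
  qed simp

  have omZ: "\<omega> Z = l Z" if Z: "Z \<in> F \<inter> Def I A (n + m)" for Z
  proof -
    have "\<omega> Z = (\<Sum>a\<in>aa. \<Sum>b\<in>bb. \<Sum>c\<in>cc. wt a b c * (if a \<subseteq> Z then 1 else 0))"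
      unfolding \<omega>_def using T1[OF _ _ _ Z] by (intro sum.cong refl) simp
    also have "\<dots> = (\<Sum>a\<in>aa. if a \<subseteq> Z then (\<Sum>b\<in>bb. \<Sum>c\<in>cc. wt a b c) else 0)"
      by (intro sum.cong refl) simp
    also have "\<dots> = (\<Sum>a\<in>aa. if a \<subseteq> Z then l a else 0)"
      using I1 S4 by (intro sum.cong refl) simp
    also have "\<dots> = l Z" by (rule S6[OF Z])
    finally show ?thesis .
  qed

  have I2: "(\<Sum>a\<in>aa. \<Sum>c\<in>cc. wt a b c * (if c \<subseteq> X then 1 else 0)) = \<mu> (b \<inter> X)"
    if b: "b \<in> bb" and X: "X \<in> Def I UNIV n" "\<forall>c\<in>cc. c \<subseteq> X \<or> c \<inter> X = {}" for b X
  proof -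
    have "(\<Sum>a\<in>aa. \<Sum>c\<in>cc. wt a b c * (if c \<subseteq> X then 1 else 0))
        = (\<Sum>c\<in>cc. \<Sum>a\<in>aa. wt a b c * (if c \<subseteq> X then 1 else 0))" by (rule sum.swap)
    also have "\<dots> = (\<Sum>c\<in>cc. (if c \<subseteq> X then \<mu> (b \<inter> c) / \<mu> b else 0) * (\<Sum>a\<in>aa. l (a \<inter> cyl b)))"
    proof (intro sum.cong refl)
      fix c assume c: "c \<in> cc"
      have eq: "\<And>x. x * \<mu> (b \<inter> c) / \<mu> b = \<mu> (b \<inter> c) / \<mu> b * x" by simp
      show "(\<Sum>a\<in>aa. wt a b c * (if c \<subseteq> X then 1 else 0)) =
          (if c \<subseteq> X then \<mu> (b \<inter> c) / \<mu> b else 0) * (\<Sum>a\<in>aa. l (a \<inter> cyl b))"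
        unfolding wt_def by (simp only: eq sum_distrib_left) simp
    qed
    also have "\<dots> = (\<Sum>c\<in>cc. (if c \<subseteq> X then \<mu> (b \<inter> c) / \<mu> b * \<mu> b else 0))"
      using S5[OF b] by (intro sum.cong refl) simp
    also have "\<dots> = (\<Sum>c\<in>cc. (if c \<subseteq> X then \<mu> (b \<inter> c) else 0))"
    proof (intro sum.cong refl)
      fix c assume c: "c \<in> cc"
      show "(if c \<subseteq> X then \<mu> (b \<inter> c) / \<mu> b * \<mu> b else 0) = (if c \<subseteq> X then \<mu> (b \<inter> c) else 0)"
      proof (cases "\<mu> b = 0")
        case True
        have "\<mu> (b \<inter> c) \<le> \<mu> b"
          by (rule meas_mono[OF algU mu bcU[OF b c]]) (use bb_sub b in auto)
        moreover have "0 \<le> \<mu> (b \<inter> c)" by (rule meas_nonneg[OF mu bcU[OF b c]])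
        ultimately show ?thesis using True by simp
      qed simp
    qed
    also have "\<dots> = \<mu> (b \<inter> X)" by (rule S2[OF b X])
    finally show ?thesis .
  qed

  have omX: "\<omega> (cyl X) = \<mu> X" if X: "X \<in> Def I UNIV n" "\<forall>c\<in>cc. c \<subseteq> X \<or> c \<inter> X = {}" for X
  proof -
    have Xt: "X \<subseteq> tuples n" using Def_sub X(1) by blast
    have "\<omega> (cyl X) = (\<Sum>a\<in>aa. \<Sum>b\<in>bb. \<Sum>c\<in>cc. wt a b c * (if c \<subseteq> X then 1 else 0))"
      unfolding \<omega>_def using T2[OF _ _ _ Xt] X(2) by (intro sum.cong refl) simp
    also have "\<dots> = (\<Sum>b\<in>bb. \<Sum>a\<in>aa. \<Sum>c\<in>cc. wt a b c * (if c \<subseteq> X then 1 else 0))" by (rule sum.swap)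
    also have "\<dots> = (\<Sum>b\<in>bb. \<mu> (b \<inter> X))" using I2 X by (intro sum.cong refl) simp
    also have "\<dots> = \<mu> X" using S3[OF X(1)] by (simp add: Int_commute)
    finally show ?thesis .
  qed

  have tupU: "tuples n \<in> Def I UNIV n" by (rule Def_top)
  have om1: "\<omega> (tuples (n + m)) = 1"
  proof -
    have "\<forall>c\<in>cc. c \<subseteq> tuples n \<or> c \<inter> tuples n = {}" using cc_tup by blast
    then have "\<omega> (cyl (tuples n)) = \<mu> (tuples n)" using omX tupU by blast
    moreover have "\<mu> (tuples n) = 1" using mu unfolding ismeas_def by blast
    ultimately show ?thesis unfolding cyl_def prodset_tuples by simp
  qed

  have bounds: "0 \<le> \<omega> W \<and> \<omega> W \<le> 1" for W
  proof
    show "0 \<le> \<omega> W" unfolding \<omega>_def ind_def using wt_nonneg by (intro sum_nonneg) auto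
    have "\<omega> W \<le> \<omega> (tuples (n + m))" unfolding \<omega>_def
    proof (intro sum_mono)
      fix a b c assume abc: "a \<in> aa" "b \<in> bb" "c \<in> cc"
      show "wt a b c * ind W (pt a b c) \<le> wt a b c * ind (tuples (n + m)) (pt a b c)"
      proof (cases "wt a b c = 0")
        case False
        then have "length (pt a b c) = n + m" using wt_pt abc by blast
        then show ?thesis using wt_nonneg[OF abc] unfolding ind_def by auto
      qed simp
    qed
    then show "\<omega> W \<le> 1" using om1 by simp
  qed

  have add: "\<omega> (W1 \<union> W2) = \<omega> W1 + \<omega> W2" if "W1 \<inter> W2 = {}" for W1 W2
  proof -
    have "\<And>u. ind (W1 \<union> W2) u = ind W1 u + ind W2 u" unfolding ind_def using that by auto
    then show ?thesis unfolding \<omega>_def by (simp add: sum.distrib distrib_left)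
  qed

  have "\<forall>X\<in>F \<inter> Def I UNIV n. \<omega> (prodset X (tuples m)) = \<mu> X"
  proof
    fix X assume X: "X \<in> F \<inter> Def I UNIV n"
    have "\<forall>c\<in>cc. c \<subseteq> X \<or> c \<inter> X = {}" using atoms_compat X unfolding cc_def by blast
    then show "\<omega> (prodset X (tuples m)) = \<mu> X" using omX X unfolding cyl_def by blast
  qed
  then show ?thesis using bounds om1 add omZ by blast
qed



lemma closed_imp_const: "closed {x. Q x} \<Longrightarrow> closed {x. P \<longrightarrow> Q x}"
  by (cases P) auto

lemma closed_eval_eq: "closed {\<omega> :: 'a \<Rightarrow> real. \<omega> W = c}"
  by (rule closed_Collect_eq) (auto intro: continuous_on_const)

lemma closed_eval_add: "closed {\<omega> :: 'a \<Rightarrow> real. \<omega> W = \<omega> X + \<omega> Y}"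
  by (rule closed_Collect_eq) (auto intro!: continuous_on_add)

lemma compact_unit_cube: "compact (PiE (UNIV :: 'a set) (\<lambda>_. {0..1::real}))"
proof -
  have "compactin (product_topology (\<lambda>_. euclidean) (UNIV :: 'a set)) (PiE UNIV (\<lambda>_. {0..1::real}))"
    by (simp add: compactin_PiE)
  then show ?thesis by (simp add: euclidean_product_topology)
qed

lemma EXT:
  fixes I :: "'r \<Rightarrow> 'u list \<Rightarrow> bool" and A :: "'u set" and n m :: nat
    and \<mu> l :: "'u list set \<Rightarrow> real"
  assumes mu: "ismeas (tuples n) (Def I UNIV n) \<mu>"
    and l: "ismeas (tuples (n + m)) (Def I A (n + m)) l"
    and lmu: "\<forall>X\<in>Def I A n. l (prodset X (tuples m)) = \<mu> X"
  shows "\<exists>\<omega>. ismeas (tuples (n + m)) (Def I UNIV (n + m)) \<omega> \<and> (\<forall>Z\<in>Def I A (n + m). \<omega> Z = l Z)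
     \<and> (\<forall>X\<in>Def I UNIV n. \<omega> (prodset X (tuples m)) = \<mu> X)"
proof -
  define S :: "('u list set \<Rightarrow> real) set" where "S = PiE UNIV (\<lambda>_. {0..1})"
  define C :: "'u list set \<times> 'u list set \<Rightarrow> ('u list set \<Rightarrow> real) set" where
    "C p = {\<omega>. \<omega> (tuples (n + m)) = 1}
      \<inter> {\<omega>. fst p \<inter> snd p = {} \<longrightarrow> \<omega> (fst p \<union> snd p) = \<omega> (fst p) + \<omega> (snd p)}
      \<inter> {\<omega>. fst p \<in> Def I A (n + m) \<longrightarrow> \<omega> (fst p) = l (fst p)}
      \<inter> {\<omega>. fst p \<in> Def I UNIV n \<longrightarrow> \<omega> (prodset (fst p) (tuples m)) = \<mu> (fst p)}" for p
  have cS: "compact S" unfolding S_def by (rule compact_unit_cube)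
  have cC: "closed (C p)" for p
    unfolding C_def
    by (intro closed_Int closed_eval_eq closed_imp_const closed_eval_add)
  have fip: "S \<inter> (\<Inter>p\<in>P. C p) \<noteq> {}" if "finite P" for P
  proof -
    define F where "F = fst ` P \<union> snd ` P"
    have "finite F" unfolding F_def using that by simp
    from FIN[OF mu l lmu this] obtain \<omega> where om:
      "\<forall>W. 0 \<le> \<omega> W \<and> \<omega> W \<le> 1" "\<omega> (tuples (n + m)) = 1"
      "\<forall>W1 W2. W1 \<inter> W2 = {} \<longrightarrow> \<omega> (W1 \<union> W2) = \<omega> W1 + \<omega> W2"
      "\<forall>Z\<in>F \<inter> Def I A (n + m). \<omega> Z = l Z"
      "\<forall>X\<in>F \<inter> Def I UNIV n. \<omega> (prodset X (tuples m)) = \<mu> X" by blast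
    have "\<omega> \<in> S" unfolding S_def using om(1) by (simp add: PiE_iff)
    moreover have "\<omega> \<in> C p" if "p \<in> P" for p
    proof -
      have "fst p \<in> F" unfolding F_def using that by blast
      then show ?thesis unfolding C_def using om(2,3,4,5) by auto
    qed
    ultimately show ?thesis by blast
  qed
  have "S \<inter> (\<Inter>p\<in>UNIV. C p) \<noteq> {}"
    by (rule compact_imp_fip_image[OF cS cC]) (use fip in auto)
  then obtain \<omega> where om: "\<omega> \<in> S" "\<And>p. \<omega> \<in> C p" by blast
  have "ismeas (tuples (n + m)) (Def I UNIV (n + m)) \<omega>"
    unfolding ismeas_def
  proof (intro conjI ballI impI)
    show "\<omega> (tuples (n + m)) = 1" using om(2)[of "({}, {})"] unfolding C_def by simp
    show "0 \<le> \<omega> X" for X using om(1) unfolding S_def by (simp add: PiE_iff)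
    show "\<omega> (X \<union> Y) = \<omega> X + \<omega> Y" if "X \<inter> Y = {}" for X Y
      using om(2)[of "(X, Y)"] that unfolding C_def by simp
  qed
  moreover have "\<forall>Z\<in>Def I A (n + m). \<omega> Z = l Z"
  proof
    fix Z assume "Z \<in> Def I A (n + m)"
    then show "\<omega> Z = l Z" using om(2)[of "(Z, Z)"] unfolding C_def by simp
  qed
  moreover have "\<forall>X\<in>Def I UNIV n. \<omega> (prodset X (tuples m)) = \<mu> X"
  proof
    fix X assume "X \<in> Def I UNIV n"
    then show "\<omega> (prodset X (tuples m)) = \<mu> X" using om(2)[of "(X, X)"] unfolding C_def by simp
  qed
  ultimately show ?thesis by blast
qed




lemma meas_localize:
  assumes "algebra \<Omega> M" "ismeas \<Omega> M m" "S \<in> M" "0 < m S"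
  shows "ismeas \<Omega> M (\<lambda>X. m (X \<inter> S) / m S)"
  unfolding ismeas_def
proof (intro conjI ballI impI)
  have "\<Omega> \<inter> S = S" using alg_sub[OF assms(1,3)] by blast
  then show "m (\<Omega> \<inter> S) / m S = 1" using assms(4) by simp
  show "0 \<le> m (X \<inter> S) / m S" if "X \<in> M" for X
    using meas_nonneg[OF assms(2) alg_Int[OF assms(1) that assms(3)]] assms(4) by simp
  show "m ((X \<union> Y) \<inter> S) / m S = m (X \<inter> S) / m S + m (Y \<inter> S) / m S"
    if "X \<in> M" "Y \<in> M" "X \<inter> Y = {}" for X Y
  proof -
    have "(X \<union> Y) \<inter> S = (X \<inter> S) \<union> (Y \<inter> S)" by blast
    moreover have "(X \<inter> S) \<inter> (Y \<inter> S) = {}" using that(3) by blast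
    ultimately have "m ((X \<union> Y) \<inter> S) = m (X \<inter> S) + m (Y \<inter> S)"
      using meas_add[OF assms(2) alg_Int[OF assms(1) that(1) assms(3)] alg_Int[OF assms(1) that(2) assms(3)]] by simp
    then show ?thesis by (simp add: add_divide_distrib)
  qed
qed

lemma meas_convex:
  assumes "ismeas \<Omega> M a" "ismeas \<Omega> M b" "0 \<le> t" "t \<le> 1"
  shows "ismeas \<Omega> M (\<lambda>X. t * a X + (1 - t) * b X)"
  unfolding ismeas_def
proof (intro conjI ballI impI)
  show "t * a \<Omega> + (1 - t) * b \<Omega> = 1" using assms(1,2) unfolding ismeas_def by simp
  show "0 \<le> t * a X + (1 - t) * b X" if "X \<in> M" for X
  proof -
    have "0 \<le> a X" "0 \<le> b X" using assms(1,2) that unfolding ismeas_def by auto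
    then show ?thesis using assms(3,4) by simp
  qed
  show "t * a (X \<union> Y) + (1 - t) * b (X \<union> Y) = t * a X + (1 - t) * b X + (t * a Y + (1 - t) * b Y)"
    if "X \<in> M" "Y \<in> M" "X \<inter> Y = {}" for X Y
    using assms(1,2) that unfolding ismeas_def by (simp add: algebra_simps)
qed

lemma prodset_Int_xy:
  assumes "X \<subseteq> tuples n" "Y \<subseteq> tuples m"
  shows "prodset X (tuples m) \<inter> prodset (tuples n) Y = prodset X Y"
  using assms by (auto simp: mem_prodset[OF assms(1)] mem_prodset_t subset_iff)

lemma prodset_Int_y: "prodset (tuples n) A \<inter> prodset (tuples n) B = prodset (tuples n) (A \<inter> B)"
  by (auto simp: mem_prodset_t)

lemma prodset_compl_y: "tuples (n + m) - prodset (tuples n) \<Phi> = prodset (tuples n) (tuples m - \<Phi>)"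
  by (auto simp: mem_prodset_t)

lemma prodset_mono_y: "A \<subseteq> B \<Longrightarrow> prodset (tuples n) A \<subseteq> prodset (tuples n) B"
  by (auto simp: mem_prodset_t)

theorem proposition3p20:
  fixes I :: "'r \<Rightarrow> 'u list \<Rightarrow> bool"
    and A :: "'u set" and n m :: nat
    and \<mu> \<nu> lam :: "'u list set \<Rightarrow> real" and \<Phi> :: "'u list set"
  assumes "monster I"
    and "small A"
    and "is_measure I UNIV n \<mu>"
    and "is_measure I UNIV m \<nu>"
    and "\<Phi> \<in> Def I A m"
    and "0 < \<nu> \<Phi>" and "\<nu> \<Phi> < 1"
    and "E_witness I A n m \<mu> \<nu> lam"
    and "amalgam I A n m lam"
  shows "E_ge I A n m \<mu> (localize \<nu> \<Phi>)"
proof -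
  have mu: "ismeas (tuples n) (Def I UNIV n) \<mu>" using assms(3) by (simp add: is_measure_eq)
  have lam: "ismeas (tuples (n + m)) (Def I A (n + m)) lam"
    and pixl: "\<forall>X\<in>Def I A n. lam (prodset X (tuples m)) = \<mu> X"
    and W: "\<And>\<omega>. ismeas (tuples (n + m)) (Def I UNIV (n + m)) \<omega> \<Longrightarrow>
            (\<forall>Z\<in>Def I A (n + m). \<omega> Z = lam Z) \<Longrightarrow>
            (\<forall>X\<in>Def I UNIV n. \<omega> (prodset X (tuples m)) = \<mu> X) \<Longrightarrow>
            (\<forall>Y\<in>Def I UNIV m. \<omega> (prodset (tuples n) Y) = \<nu> Y)"
    using assms(8) unfolding E_witness_def is_measure_eq pix_def piy_def by blast+
  have am: "\<forall>X\<in>Def I A n. \<forall>Y\<in>Def I A m. lam (prodset X Y) = lam (prodset X (tuples m)) * lam (prodset (tuples n) Y)"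
    using assms(9) unfolding amalgam_def pix_def piy_def by blast
  have algA: "algebra (tuples (n + m)) (Def I A (n + m))" by (rule Def_algebra)
  have algU: "algebra (tuples (n + m)) (Def I UNIV (n + m))" by (rule Def_algebra)
  have DAU: "Def I A (n + m) \<subseteq> Def I UNIV (n + m)" by (rule Def_mono) simp
  have DAUm: "Def I A m \<subseteq> Def I UNIV m" by (rule Def_mono) simp
  have DAUn: "Def I A n \<subseteq> Def I UNIV n" by (rule Def_mono) simp
  have PhiA: "\<Phi> \<in> Def I A m" by fact
  have PhiU: "\<Phi> \<in> Def I UNIV m" using PhiA DAUm by blast
  have Phit: "\<Phi> \<subseteq> tuples m" using Def_sub PhiA by blast
  define SP where "SP = prodset (tuples n) \<Phi>"
  define SC where "SC = prodset (tuples n) (tuples m - \<Phi>)"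
  have cPhiA: "tuples m - \<Phi> \<in> Def I A m" using Def_compl PhiA by blast
  have SPA: "SP \<in> Def I A (n + m)" unfolding SP_def by (rule Def_cyly[OF PhiA])
  have SCA: "SC \<in> Def I A (n + m)" unfolding SC_def by (rule Def_cyly[OF cPhiA])
  have SPU: "SP \<in> Def I UNIV (n + m)" using SPA DAU by blast
  have SCU: "SC \<in> Def I UNIV (n + m)" using SCA DAU by blast
  have SCeq: "SC = tuples (n + m) - SP" unfolding SC_def SP_def by (rule prodset_compl_y[symmetric])
  have SPsub: "SP \<subseteq> tuples (n + m)" using Def_sub SPA by blast
  have SPSC: "SP \<inter> SC = {}" using SCeq by blast
  define p where "p = lam SP"

  obtain \<omega>0 where om0: "ismeas (tuples (n + m)) (Def I UNIV (n + m)) \<omega>0"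
    "\<forall>Z\<in>Def I A (n + m). \<omega>0 Z = lam Z" "\<forall>X\<in>Def I UNIV n. \<omega>0 (prodset X (tuples m)) = \<mu> X"
    using EXT[OF mu lam pixl] by blast
  have "\<omega>0 SP = \<nu> \<Phi>" using W[OF om0] PhiU unfolding SP_def by blast
  then have pnu: "p = \<nu> \<Phi>" using om0(2) SPA unfolding p_def by simp
  have p0: "0 < p" and p1: "p < 1" using pnu assms(6,7) by auto
  have lamSC: "lam SC = 1 - p"
  proof -
    have "lam (tuples (n + m)) = lam (tuples (n + m) \<inter> SP) + lam (tuples (n + m) - SP)"
      by (rule meas_split[OF algA lam alg_top[OF algA] SPA])
    moreover have "lam (tuples (n + m)) = 1" using lam unfolding ismeas_def by blast
    moreover have "tuples (n + m) \<inter> SP = SP" using SPsub by blast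
    ultimately show ?thesis using SCeq unfolding p_def by simp
  qed

  define l1 where "l1 Z = lam (Z \<inter> SP) / lam SP" for Z
  define l2 where "l2 Z = lam (Z \<inter> SC) / lam SC" for Z
  have l1m: "ismeas (tuples (n + m)) (Def I A (n + m)) l1"
    unfolding l1_def by (rule meas_localize[OF algA lam SPA]) (use p0 p_def in simp)
  have l2m: "ismeas (tuples (n + m)) (Def I A (n + m)) l2"
    unfolding l2_def by (rule meas_localize[OF algA lam SCA]) (use p1 lamSC in simp)
  have pix1: "\<forall>X\<in>Def I A n. l1 (prodset X (tuples m)) = \<mu> X"
  proof
    fix X assume X: "X \<in> Def I A n"
    have Xt: "X \<subseteq> tuples n" using Def_sub X by blast
    have "l1 (prodset X (tuples m)) = lam (prodset X \<Phi>) / p"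
      unfolding l1_def SP_def p_def using prodset_Int_xy[OF Xt Phit] by simp
    also have "\<dots> = lam (prodset X (tuples m)) * p / p" using am X PhiA unfolding p_def SP_def by simp
    also have "\<dots> = \<mu> X" using pixl X p0 by simp
    finally show "l1 (prodset X (tuples m)) = \<mu> X" .
  qed
  have pix2: "\<forall>X\<in>Def I A n. l2 (prodset X (tuples m)) = \<mu> X"
  proof
    fix X assume X: "X \<in> Def I A n"
    have Xt: "X \<subseteq> tuples n" using Def_sub X by blast
    have ct: "tuples m - \<Phi> \<subseteq> tuples m" by blast
    have "l2 (prodset X (tuples m)) = lam (prodset X (tuples m - \<Phi>)) / (1 - p)"
      unfolding l2_def SC_def using prodset_Int_xy[OF Xt ct] lamSC SC_def by simp
    also have "\<dots> = lam (prodset X (tuples m)) * (1 - p) / (1 - p)"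
      using am X cPhiA lamSC unfolding SC_def by simp
    also have "\<dots> = \<mu> X" using pixl X p1 by simp
    finally show "l2 (prodset X (tuples m)) = \<mu> X" .
  qed
  obtain R where R: "ismeas (tuples (n + m)) (Def I UNIV (n + m)) R"
    "\<forall>Z\<in>Def I A (n + m). R Z = l2 Z" "\<forall>X\<in>Def I UNIV n. R (prodset X (tuples m)) = \<mu> X"
    using EXT[OF mu l2m pix2] by blast
  have lam0: "lam {} = 0" by (rule meas_empty[OF algA lam])
  have RSP: "R SP = 0" using R(2) SPA SPSC lam0 unfolding l2_def by simp

  have "E_witness I A n m \<mu> (localize \<nu> \<Phi>) l1"
    unfolding E_witness_def is_measure_eq pix_def piy_def
  proof (intro conjI allI impI ballI)
    show "ismeas (tuples (n + m)) (Def I A (n + m)) l1" by (rule l1m)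
    show "l1 (prodset X (tuples m)) = \<mu> X" if "X \<in> Def I A n" for X using pix1 that by blast
    fix \<omega>' Y
    assume H: "ismeas (tuples (n + m)) (Def I UNIV (n + m)) \<omega>' \<and>
        (\<forall>Z\<in>Def I A (n + m). \<omega>' Z = l1 Z) \<and> (\<forall>X\<in>Def I UNIV n. \<omega>' (prodset X (tuples m)) = \<mu> X)"
      and Y: "Y \<in> Def I UNIV m"
    have om': "ismeas (tuples (n + m)) (Def I UNIV (n + m)) \<omega>'"
      "\<forall>Z\<in>Def I A (n + m). \<omega>' Z = l1 Z" "\<forall>X\<in>Def I UNIV n. \<omega>' (prodset X (tuples m)) = \<mu> X"
      using H by blast+
    define \<omega> where "\<omega> Z = p * \<omega>' Z + (1 - p) * R Z" for Z
    have omm: "ismeas (tuples (n + m)) (Def I UNIV (n + m)) \<omega>"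
      unfolding \<omega>_def by (rule meas_convex[OF om'(1) R(1)]) (use p0 p1 in auto)
    have omA: "\<forall>Z\<in>Def I A (n + m). \<omega> Z = lam Z"
    proof
      fix Z assume Z: "Z \<in> Def I A (n + m)"
      have "\<omega> Z = lam (Z \<inter> SP) + lam (Z \<inter> SC)"
        unfolding \<omega>_def using om'(2) R(2) Z p0 p1 lamSC unfolding l1_def l2_def p_def by simp
      also have "Z \<inter> SC = Z - SP" using SCeq Def_sub[OF Z] by blast
      also have "lam (Z \<inter> SP) + lam (Z - SP) = lam Z"
        by (rule meas_split[OF algA lam Z SPA, symmetric])
      finally show "\<omega> Z = lam Z" .
    qed
    have omX: "\<forall>X\<in>Def I UNIV n. \<omega> (prodset X (tuples m)) = \<mu> X"
      unfolding \<omega>_def using om'(3) R(3) by (simp add: algebra_simps)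
    have WY: "\<forall>Y\<in>Def I UNIV m. \<omega> (prodset (tuples n) Y) = \<nu> Y" by (rule W[OF omm omA omX])
    have PhiY: "\<Phi> \<inter> Y \<in> Def I UNIV m" using Def_Int PhiU Y by blast
    define PY where "PY = prodset (tuples n) Y"
    define PPY where "PPY = prodset (tuples n) (\<Phi> \<inter> Y)"
    have PYU: "PY \<in> Def I UNIV (n + m)" unfolding PY_def by (rule Def_cyly[OF Y])
    have PPYU: "PPY \<in> Def I UNIV (n + m)" unfolding PPY_def by (rule Def_cyly[OF PhiY])
    have PPYsub: "PPY \<subseteq> SP" unfolding PPY_def SP_def by (rule prodset_mono_y) blast
    have "R PPY \<le> R SP" by (rule meas_mono[OF algU R(1) PPYU SPU PPYsub])
    moreover have "0 \<le> R PPY" by (rule meas_nonneg[OF R(1) PPYU])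
    ultimately have RPPY: "R PPY = 0" using RSP by simp
    have "\<omega>' PY = \<omega>' (PY \<inter> SP) + \<omega>' (PY - SP)" by (rule meas_split[OF algU om'(1) PYU SPU])
    moreover have "PY \<inter> SP = PPY" unfolding PY_def SP_def PPY_def by (simp add: prodset_Int_y Int_commute)
    moreover have "\<omega>' (PY - SP) = 0"
    proof -
      have PYt: "PY \<subseteq> tuples (n + m)" using Def_sub PYU by blast
      have "PY - SP \<subseteq> SC" using SCeq PYt by blast
      moreover have "PY - SP \<in> Def I UNIV (n + m)" by (rule alg_Diff[OF algU PYU SPU])
      ultimately have "\<omega>' (PY - SP) \<le> \<omega>' SC" by (intro meas_mono[OF algU om'(1) _ SCU])
      moreover have "\<omega>' SC = 0" using om'(2) SCA SPSC lam0 unfolding l1_def by (simp add: Int_commute)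
      moreover have "0 \<le> \<omega>' (PY - SP)" by (rule meas_nonneg[OF om'(1) alg_Diff[OF algU PYU SPU]])
      ultimately show ?thesis by simp
    qed
    ultimately have eqPY: "\<omega>' PY = \<omega>' PPY" by simp
    have "\<nu> (\<Phi> \<inter> Y) = \<omega> PPY" using WY PhiY unfolding PPY_def by simp
    also have "\<dots> = p * \<omega>' PY" unfolding \<omega>_def using RPPY eqPY by simp
    finally have "\<nu> (\<Phi> \<inter> Y) = \<nu> \<Phi> * \<omega>' PY" using pnu by simp
    then show "\<omega>' (prodset (tuples n) Y) = localize \<nu> \<Phi> Y"
      unfolding localize_def PY_def using assms(6) by (simp add: field_simps)
  qed
  then show ?thesis unfolding E_ge_def by blast
qed


end
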